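(* Let $B=(B,+,0)$ be a unitary magma and $(X,\varphi)$ a $B$-action. The set $$X\rtimes_\varphi B=\{(x,b)\in X\times B\mid \varphi(x,0,0,b)=x\}$$ is closed under the binary operation on $X\times B$ given by $(x,b)+(x',b')=(\varphi(x,b,x',b'),\,b+b')$, and $(X\rtimes_\varphi B,+,(0,0))$ is a unitary magma.
   Context: A unitary magma is a set with a binary operation $+$ and an element $0$ with $b+0=b=0+b$ for all $b$. A $B$-action is a pair $(X,\varphi)$ with $X$ a set and $\varphi\colon X\times B\times X\times B\to X$ a map such that: (1) there is an element $0\in X$ with $\varphi(x,0,0,0)=x=\varphi(0,0,x,0)$ for all $x\in X$; (2) $\varphi(x,b,0,0)=\varphi(x,0,0,b)=\varphi(0,0,x,b)$ for all $x\in X,b\in B$; (3) $\varphi(0,b,0,b')=0$ for all $b,b'\in B$; (4) writing $\varphi_{00}(x,b)=\varphi(x,0,0,b)$, for all $x,x'\in X$, $b,b'\in B$: $\varphi(x,b,x',b')=\varphi_{00}\big(\varphi(\varphi_{00}(x,b),b,\varphi_{00}(x',b'),b'),\,b+b'\big)$. *)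

theory Defs
  imports Main
begin

definition unitary_magma :: "'a set \<Rightarrow> ('a \<Rightarrow> 'a \<Rightarrow> 'a) \<Rightarrow> 'a \<Rightarrow> bool" where
  "unitary_magma S f e \<longleftrightarrow> (\<forall>a\<in>S. \<forall>b\<in>S. f a b \<in> S) \<and> e \<in> S \<and>
     (\<forall>b\<in>S. f b e = b \<and> f e b = b)"

text \<open>A B-action on a set X with distinguished element z (the 0 of X);
  the unitary magma B is (SB, add, zB).\<close>
definition B_action :: "'b set \<Rightarrow> ('b \<Rightarrow> 'b \<Rightarrow> 'b) \<Rightarrow> 'b \<Rightarrow>
    'x set \<Rightarrow> 'x \<Rightarrow> ('x \<Rightarrow> 'b \<Rightarrow> 'x \<Rightarrow> 'b \<Rightarrow> 'x) \<Rightarrow> bool" where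
  "B_action SB add zB X z phi \<longleftrightarrow>
     z \<in> X \<and>
     (\<forall>x\<in>X. \<forall>b\<in>SB. \<forall>x'\<in>X. \<forall>b'\<in>SB. phi x b x' b' \<in> X) \<and>
     (\<forall>x\<in>X. phi x zB z zB = x \<and> phi z zB x zB = x) \<and>
     (\<forall>x\<in>X. \<forall>b\<in>SB. phi x b z zB = phi x zB z b \<and> phi x zB z b = phi z zB x b) \<and>
     (\<forall>b\<in>SB. \<forall>b'\<in>SB. phi z b z b' = z) \<and>
     (\<forall>x\<in>X. \<forall>x'\<in>X. \<forall>b\<in>SB. \<forall>b'\<in>SB.
        phi x b x' b' = phi (phi (phi x zB z b) b (phi x' zB z b') b') zB z (add b b'))"

definition semidirect_carrier :: "'b \<Rightarrow> 'x set \<Rightarrow> 'b set \<Rightarrow> 'x \<Rightarrow>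
    ('x \<Rightarrow> 'b \<Rightarrow> 'x \<Rightarrow> 'b \<Rightarrow> 'x) \<Rightarrow> ('x \<times> 'b) set" where
  "semidirect_carrier zB X SB z phi = {(x, b) \<in> X \<times> SB. phi x zB z b = x}"

definition semidirect_op :: "('b \<Rightarrow> 'b \<Rightarrow> 'b) \<Rightarrow> ('x \<Rightarrow> 'b \<Rightarrow> 'x \<Rightarrow> 'b \<Rightarrow> 'x) \<Rightarrow>
    'x \<times> 'b \<Rightarrow> 'x \<times> 'b \<Rightarrow> 'x \<times> 'b" where
  "semidirect_op add phi p q = (phi (fst p) (snd p) (fst q) (snd q), add (snd p) (snd q))"

end

theory Submission
  imports Defs
begin

lemma closure_aux:
  assumes "unitary_magma SB add zB"
    and "B_action SB add zB X z phi" "x\<in>X" "b \<in> SB" "x'\<in>X" "b'\<in>SB" "phi x zB z b = x" "phi x' zB z b' = x'"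
  shows "phi (phi x b x' b') zB z (add b b') = phi x b x' b'"
  using assms unfolding B_action_def unitary_magma_def
  by metis

theorem proposition3p2:
  fixes SB :: "'b set" and add :: "'b \<Rightarrow> 'b \<Rightarrow> 'b" and zB :: 'b
    and X :: "'x set" and z :: 'x and phi :: "'x \<Rightarrow> 'b \<Rightarrow> 'x \<Rightarrow> 'b \<Rightarrow> 'x"
  assumes "unitary_magma SB add zB"
    and "B_action SB add zB X z phi"
  shows "(\<forall>p\<in>semidirect_carrier zB X SB z phi. \<forall>q\<in>semidirect_carrier zB X SB z phi.
            semidirect_op add phi p q \<in> semidirect_carrier zB X SB z phi)
         \<and> unitary_magma (semidirect_carrier zB X SB z phi) (semidirect_op add phi) (z, zB)"
proof -
  have cl: "\<forall>p\<in>semidirect_carrier zB X SB z phi. \<forall>q\<in>semidirect_carrier zB X SB z phi.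
            semidirect_op add phi p q \<in> semidirect_carrier zB X SB z phi"
  proof (intro ballI)
    fix p q assume p: "p \<in> semidirect_carrier zB X SB z phi" and q: "q \<in> semidirect_carrier zB X SB z phi"
    obtain x b where pe: "p = (x,b)" by (cases p)
    obtain x' b' where qe: "q = (x',b')" by (cases q)
    have h: "x\<in>X" "b \<in> SB" "x'\<in>X" "b'\<in>SB" "phi x zB z b = x" "phi x' zB z b' = x'"
      using p q pe qe by (auto simp: semidirect_carrier_def)
    have "phi x b x' b' \<in> X" "add b b' \<in> SB"
      using h assms unfolding B_action_def unitary_magma_def by blast+
    then show "semidirect_op add phi p q \<in> semidirect_carrier zB X SB z phi"
      using closure_aux[OF assms h] pe qe by (simp add: semidirect_op_def semidirect_carrier_def)
  qed
  have "unitary_magma (semidirect_carrier zB X SB z phi) (semidirect_op add phi) (z, zB)"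
    unfolding unitary_magma_def
  proof (intro conjI)
    show "(z, zB) \<in> semidirect_carrier zB X SB z phi"
    proof -
      have "z \<in> X" "zB \<in> SB" "phi z zB z zB = z"
        using assms unfolding B_action_def unitary_magma_def by blast+
      then show ?thesis unfolding semidirect_carrier_def by blast
    qed
    show "\<forall>p\<in>semidirect_carrier zB X SB z phi.
       semidirect_op add phi p (z, zB) = p \<and> semidirect_op add phi (z, zB) p = p"
    proof
      fix p assume p: "p \<in> semidirect_carrier zB X SB z phi"
      obtain x b where pe: "p = (x,b)" by (cases p)
      have h: "x\<in>X" "b \<in> SB" "phi x zB z b = x"
        using p pe by (auto simp: semidirect_carrier_def)
      have a2: "phi x b z zB = phi x zB z b" "phi x zB z b = phi z zB x b"
        using assms(2) h(1,2) unfolding B_action_def by blast+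
      have a3: "add b zB = b" "add zB b = b"
        using assms(1) h(2) unfolding unitary_magma_def by blast+
      show "semidirect_op add phi p (z, zB) = p \<and> semidirect_op add phi (z, zB) p = p"
        using a2 a3 h pe by (simp add: semidirect_op_def)
    qed
  qed (use cl in blast)
  with cl show ?thesis by blast
qed

end
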